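(* Let $U\subseteq\mathbb{R}^n$ be open and $g:U\to\mathbb{R}^m$ a $PC^2$ mapping. Then $g$ is second-order directionally differentiable and second-order gph-regular at every $x\in U$.
   Context: A continuous $g:U\to\mathbb{R}^m$ is a continuous selection of $C^2$ mappings if there are finitely many $C^2$ mappings $g_i:U\to\mathbb{R}^m$, $i\in[l]$, such that $\{i:g(x)=g_i(x)\}$ is nonempty for every $x\in U$; $g$ is $PC^2$ if every point of $U$ has a neighborhood $V\subseteq U$ on which $g$ restricted to $V$ is such a continuous selection. $g'(x;d)=\lim_{t\downarrow0}(g(x+td)-g(x))/t$; $g$ is second-order directionally differentiable at $x$ if for all $d$, $g'(x;d)$ exists and $g''(x;d,w):=\lim_{t\downarrow0}\frac{g(x+td+\frac12t^2w)-g(x)-tg'(x;d)}{\frac12t^2}$ exists for all $w$. $g$ is second-order gph-regular at $x$ if it is locally Lipschitz continuous and second-order directionally differentiable at $x$ and for every $d$ and every path $w:\mathbb{R}_+\to\mathbb{R}^n$ with $tw(t)\to0$ as $t\downarrow0$ there is $r$ with $\|r(t)\|/t^2\to0$ as $t\downarrow0$ and $g(x+td+\frac12t^2w(t))=g(x)+tg'(x;d)+\frac12t^2g''(x;d,w(t))+r(t)$ for small $t\ge0$. *)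

theory Defs
  imports "HOL-Analysis.Analysis"
begin

definition C2_on :: "'a::euclidean_space set \<Rightarrow> ('a \<Rightarrow> 'b::euclidean_space) \<Rightarrow> bool" where
  "C2_on V f \<longleftrightarrow>
     (\<exists>f' :: 'a \<Rightarrow> ('a \<Rightarrow>\<^sub>L 'b). \<exists>f'' :: 'a \<Rightarrow> ('a \<Rightarrow>\<^sub>L ('a \<Rightarrow>\<^sub>L 'b)).
        (\<forall>x\<in>V. (f has_derivative blinfun_apply (f' x)) (at x)) \<and>
        (\<forall>x\<in>V. (f' has_derivative blinfun_apply (f'' x)) (at x)) \<and>
        continuous_on V f'')"

definition cont_selection_C2 :: "'a::euclidean_space set \<Rightarrow> ('a \<Rightarrow> 'b::euclidean_space) \<Rightarrow> bool" where
  "cont_selection_C2 V g \<longleftrightarrow> continuous_on V g \<and>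
     (\<exists>F :: ('a \<Rightarrow> 'b) set. finite F \<and> (\<forall>f\<in>F. C2_on V f) \<and> (\<forall>y\<in>V. \<exists>f\<in>F. g y = f y))"

definition PC2_on :: "'a::euclidean_space set \<Rightarrow> ('a \<Rightarrow> 'b::euclidean_space) \<Rightarrow> bool" where
  "PC2_on U g \<longleftrightarrow> (\<forall>x\<in>U. \<exists>V. open V \<and> x \<in> V \<and> V \<subseteq> U \<and> cont_selection_C2 V g)"

definition dir_deriv :: "('a::real_normed_vector \<Rightarrow> 'b::real_normed_vector) \<Rightarrow> 'a \<Rightarrow> 'a \<Rightarrow> 'b" where
  "dir_deriv g x d = Lim (at_right 0) (\<lambda>t::real. (g (x + t *\<^sub>R d) - g x) /\<^sub>R t)"

definition dir_deriv2 :: "('a::real_normed_vector \<Rightarrow> 'b::real_normed_vector) \<Rightarrow> 'a \<Rightarrow> 'a \<Rightarrow> 'a \<Rightarrow> 'b" where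
  "dir_deriv2 g x d w = Lim (at_right 0)
     (\<lambda>t::real. (g (x + t *\<^sub>R d + ((1/2) * t\<^sup>2) *\<^sub>R w) - g x - t *\<^sub>R dir_deriv g x d) /\<^sub>R ((1/2) * t\<^sup>2))"

definition so_dir_differentiable :: "('a::real_normed_vector \<Rightarrow> 'b::real_normed_vector) \<Rightarrow> 'a \<Rightarrow> bool" where
  "so_dir_differentiable g x \<longleftrightarrow>
     (\<forall>d. (\<exists>v. ((\<lambda>t::real. (g (x + t *\<^sub>R d) - g x) /\<^sub>R t) \<longlongrightarrow> v) (at_right 0)) \<and>
          (\<forall>w. \<exists>v. ((\<lambda>t::real. (g (x + t *\<^sub>R d + ((1/2) * t\<^sup>2) *\<^sub>R w) - g x - t *\<^sub>R dir_deriv g x d)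
                        /\<^sub>R ((1/2) * t\<^sup>2)) \<longlongrightarrow> v) (at_right 0)))"

definition locally_lipschitz_at :: "('a::metric_space \<Rightarrow> 'b::metric_space) \<Rightarrow> 'a \<Rightarrow> bool" where
  "locally_lipschitz_at g x \<longleftrightarrow> (\<exists>e>0. \<exists>L. L-lipschitz_on (ball x e) g)"

definition so_gph_regular :: "('a::real_normed_vector \<Rightarrow> 'b::real_normed_vector) \<Rightarrow> 'a \<Rightarrow> bool" where
  "so_gph_regular g x \<longleftrightarrow> locally_lipschitz_at g x \<and> so_dir_differentiable g x \<and>
     (\<forall>d. \<forall>w :: real \<Rightarrow> 'a. ((\<lambda>t. t *\<^sub>R w t) \<longlongrightarrow> 0) (at_right 0) \<longrightarrow>
        (\<exists>r :: real \<Rightarrow> 'b. ((\<lambda>t. norm (r t) / t\<^sup>2) \<longlongrightarrow> 0) (at_right 0) \<and>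
           (\<exists>\<delta>>0. \<forall>t. 0 \<le> t \<and> t < \<delta> \<longrightarrow>
              g (x + t *\<^sub>R d + ((1/2) * t\<^sup>2) *\<^sub>R w t) =
                g x + t *\<^sub>R dir_deriv g x d + ((1/2) * t\<^sup>2) *\<^sub>R dir_deriv2 g x d (w t) + r t)))"

end

theory Submission
  imports Defs
begin

lemma cauchy_right:
  fixes q :: "real \<Rightarrow> 'b::banach"
  assumes "\<forall>\<epsilon>>0. \<forall>\<^sub>F t in at_right 0. \<forall>\<tau>\<in>{0<..t}. dist (q \<tau>) (q t) \<le> \<epsilon>"
  shows "\<exists>L. (q \<longlongrightarrow> L) (at_right 0)"
proof -
  have "cauchy_filter (filtermap q (at_right (0::real)))"
    unfolding cauchy_filter_metric_filtermap
  proof (intro allI impI)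
    fix e :: real assume "e > 0"
    then have "\<forall>\<^sub>F t in at_right 0. \<forall>\<tau>\<in>{0<..t}. dist (q \<tau>) (q t) \<le> e/3"
      using assms[rule_format, of "e/3"] \<open>e>0\<close> by simp
    then obtain b where b: "b > 0" "\<And>t. t \<in> {0<..<b} \<Longrightarrow> \<forall>\<tau>\<in>{0<..t}. dist (q \<tau>) (q t) \<le> e/3"
      unfolding eventually_at_right_field by auto
    show "\<exists>P. eventually P (at_right 0) \<and> (\<forall>x y. P x \<and> P y \<longrightarrow> dist (q x) (q y) < e)"
    proof (intro exI conjI allI impI)
      show "eventually (\<lambda>x. x \<in> {0<..<b}) (at_right (0::real))"
        using b(1) unfolding eventually_at_right_field by auto
      fix x y assume "x \<in> {0<..<b} \<and> y \<in> {0<..<b}"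
      then have xy: "x \<in> {0<..<b}" "y \<in> {0<..<b}" by auto
      show "dist (q x) (q y) < e"
      proof (cases "x \<le> y")
        case True
        then have "dist (q x) (q y) \<le> e/3" using b(2)[OF xy(2)] xy by auto
        then show ?thesis using \<open>e>0\<close> by linarith
      next
        case False
        then have "dist (q y) (q x) \<le> e/3" using b(2)[OF xy(1)] xy by auto
        then show ?thesis using \<open>e>0\<close> by (simp add: dist_commute)
      qed
    qed
  qed
  then obtain c where "filtermap q (at_right 0) \<le> nhds c"
    using cauchy_filter_complete_converges[OF _ complete_UNIV] by fastforce
  then show ?thesis unfolding filterlim_def by blast
qed

lemma cluster_diam:
  fixes q :: "real \<Rightarrow> 'b::real_normed_vector"
  assumes "connected S" "continuous_on S q" "finite C" "r \<ge> 0"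
    "\<forall>\<tau>\<in>S. \<exists>c\<in>C. dist (q \<tau>) c \<le> r"
  shows "\<forall>\<tau>1\<in>S. \<forall>\<tau>2\<in>S. dist (q \<tau>1) (q \<tau>2) \<le> 3 ^ card C * r"
  using assms
proof (induction "card C" arbitrary: C r)
  case 0
  then show ?case by auto
next
  case (Suc n)
  show ?case
  proof (cases "\<exists>c1\<in>C. \<exists>c2\<in>C. c1 \<noteq> c2 \<and> dist c1 c2 \<le> 2 * r")
    case True
    then obtain c1 c2 where c: "c1 \<in> C" "c2 \<in> C" "c1 \<noteq> c2" "dist c1 c2 \<le> 2 * r" by blast
    have "card (C - {c2}) = n" using Suc.hyps(2) c(2) Suc.prems(3) by simp
    moreover have "\<forall>\<tau>\<in>S. \<exists>c\<in>C - {c2}. dist (q \<tau>) c \<le> 3 * r"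
    proof
      fix \<tau> assume "\<tau> \<in> S"
      then obtain c where "c \<in> C" "dist (q \<tau>) c \<le> r" using Suc.prems(5) by blast
      then show "\<exists>c\<in>C - {c2}. dist (q \<tau>) c \<le> 3 * r"
      proof (cases "c = c2")
        case True
        have "dist (q \<tau>) c1 \<le> dist (q \<tau>) c2 + dist c2 c1" by (rule dist_triangle)
        then have "dist (q \<tau>) c1 \<le> 3 * r" using True \<open>dist (q \<tau>) c \<le> r\<close> c(4)
          by (simp add: dist_commute)
        then show ?thesis using c by blast
      next
        case False
        then show ?thesis using \<open>c \<in> C\<close> \<open>dist (q \<tau>) c \<le> r\<close> Suc.prems(4) by force
      qed
    qed
    ultimately have "\<forall>\<tau>1\<in>S. \<forall>\<tau>2\<in>S. dist (q \<tau>1) (q \<tau>2) \<le> 3 ^ n * (3 * r)"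
      using Suc.hyps(1)[of "C - {c2}" "3 * r"] Suc.prems by auto
    then show ?thesis unfolding Suc.hyps(2)[symmetric] by (simp add: ac_simps)
  next
    case False
    then have far: "\<And>c1 c2. c1 \<in> C \<Longrightarrow> c2 \<in> C \<Longrightarrow> c1 \<noteq> c2 \<Longrightarrow> dist c1 c2 > 2 * r"
      by force
    show ?thesis
    proof (intro ballI)
      fix \<tau>1 \<tau>2 assume t: "\<tau>1 \<in> S" "\<tau>2 \<in> S"
      then obtain c where c: "c \<in> C" "dist (q \<tau>1) c \<le> r" using Suc.prems(5) by blast
      define A where "A = cball c r"
      define B where "B = (\<Union>c'\<in>C - {c}. cball c' r)"
      have "closed A" unfolding A_def by simp
      have "closed B" unfolding B_def using Suc.prems(3) by (intro closed_UN) auto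
      have cov: "q ` S \<subseteq> A \<union> B"
      proof
        fix y assume "y \<in> q ` S"
        then obtain \<tau> where "\<tau> \<in> S" "y = q \<tau>" by blast
        then obtain c' where "c' \<in> C" "dist (q \<tau>) c' \<le> r" using Suc.prems(5) by blast
        then show "y \<in> A \<union> B" unfolding A_def B_def using \<open>y = q \<tau>\<close>
          by (cases "c' = c") (auto simp: dist_commute)
      qed
      have disj: "A \<inter> B = {}"
      proof (rule ccontr)
        assume "A \<inter> B \<noteq> {}"
        then obtain y c' where "y \<in> cball c r" "c' \<in> C" "c' \<noteq> c" "y \<in> cball c' r"
          unfolding A_def B_def by blast
        then have "dist c c' \<le> 2 * r"
          using dist_triangle[of c c' y] by (simp add: dist_commute)
        then show False using far[OF c(1) \<open>c' \<in> C\<close>] \<open>c' \<noteq> c\<close> by auto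
      qed
      have "connected (q ` S)" using Suc.prems(1,2) by (simp add: connected_continuous_image)
      moreover have "A \<inter> q ` S \<noteq> {}" using c t unfolding A_def by (auto simp: dist_commute)
      ultimately have "B \<inter> q ` S = {}"
        using \<open>closed A\<close> \<open>closed B\<close> cov disj unfolding connected_closed by blast
      then have "q \<tau>2 \<in> A" using cov t by blast
      then have "dist (q \<tau>1) (q \<tau>2) \<le> 2 * r"
        using c dist_triangle[of "q \<tau>1" "q \<tau>2" c] unfolding A_def by (simp add: dist_commute)
      also have "\<dots> \<le> 3 ^ card C * r"
      proof -
        have "(3::real)^1 \<le> 3 ^ card C"
          by (rule power_increasing) (use Suc.hyps(2) in auto)
        then have "(2::real) \<le> 3 ^ card C" by simp
        then show ?thesis using Suc.prems(4) by (simp add: mult_right_mono)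
      qed
      finally show "dist (q \<tau>1) (q \<tau>2) \<le> 3 ^ card C * r" .
    qed
  qed
qed

lemma sel_lipschitz:
  fixes h :: "real \<Rightarrow> 'b::real_normed_vector"
  assumes "finite J" "a \<le> b" "continuous_on {a..b} h"
    "\<forall>j\<in>J. continuous_on {a..b} (H j)"
    "\<forall>j\<in>J. \<forall>s\<in>{a..b}. \<forall>s'\<in>{a..b}. norm (H j s - H j s') \<le> K * \<bar>s - s'\<bar>"
    "\<forall>s\<in>{a..b}. \<exists>j\<in>J. h s = H j s"
  shows "norm (h b - h a) \<le> K * (b - a)"
  using assms
proof (induction "card J" arbitrary: J a b rule: less_induct)
  case less
  obtain j where j: "j \<in> J" "h a = H j a" using less.prems(2,6) by force
  define A where "A = {s \<in> {a..b}. h s - H j s = 0}"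
  have "closed A" unfolding A_def
    by (rule continuous_closed_preimage_constant)
       (use less.prems(3,4) j(1) in \<open>auto intro: continuous_on_diff\<close>)
  have "a \<in> A" using j less.prems(2) unfolding A_def by auto
  have "bdd_above A" unfolding A_def by (rule bdd_aboveI[of _ b]) auto
  define s1 where "s1 = Sup A"
  have "s1 \<in> A" unfolding s1_def using \<open>closed A\<close> \<open>a \<in> A\<close> \<open>bdd_above A\<close>
    by (intro closed_contains_Sup) auto
  then have s1: "a \<le> s1" "s1 \<le> b" "h s1 = H j s1" unfolding A_def by auto
  have above: "\<And>s. s \<in> {s1<..b} \<Longrightarrow> s \<notin> A"
    using \<open>bdd_above A\<close> cSup_upper unfolding s1_def by fastforce
  have part1: "norm (h s1 - h a) \<le> K * (s1 - a)"
  proof -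
    have "norm (H j s1 - H j a) \<le> K * \<bar>s1 - a\<bar>"
    proof -
      have "s1 \<in> {a..b}" "a \<in> {a..b}" using s1 less.prems(2) by auto
      then show ?thesis using less.prems(5) j(1) by blast
    qed
    then show ?thesis using j s1 by simp
  qed
  show ?case
  proof (cases "s1 = b")
    case True then show ?thesis using part1 by simp
  next
    case False
    then have "s1 < b" using s1 by simp
    define J' where "J' = J - {j}"
    define A' where "A' = (\<Union>j'\<in>J'. {s \<in> {a..b}. h s - H j' s = 0})"
    have "closed A'" unfolding A'_def
    proof (rule closed_UN)
      show "finite J'" unfolding J'_def using less.prems(1) by simp
      show "\<forall>j'\<in>J'. closed {s \<in> {a..b}. h s - H j' s = 0}"
      proof
        fix j' assume "j' \<in> J'"
        then have "j' \<in> J" unfolding J'_def by simp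
        show "closed {s \<in> {a..b}. h s - H j' s = 0}"
          by (rule continuous_closed_preimage_constant)
             (use less.prems(3,4) \<open>j' \<in> J\<close> in \<open>auto intro: continuous_on_diff\<close>)
      qed
    qed
    have "{s1<..b} \<subseteq> A'"
    proof
      fix s assume s: "s \<in> {s1<..b}"
      then have "s \<in> {a..b}" using s1 by auto
      then obtain j' where "j' \<in> J" "h s = H j' s" using less.prems(6) by blast
      moreover have "j' \<noteq> j" using above[OF s] \<open>s \<in> {a..b}\<close> \<open>h s = H j' s\<close> unfolding A_def by auto
      ultimately show "s \<in> A'" unfolding A'_def J'_def using \<open>s \<in> {a..b}\<close> by auto
    qed
    then have "closure {s1<..b} \<subseteq> A'" using \<open>closed A'\<close> by (rule closure_minimal)
    then have sub: "{s1..b} \<subseteq> A'" using \<open>s1 < b\<close> by simp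
    have IH: "norm (h b - h s1) \<le> K * (b - s1)"
    proof (rule less.hyps[of J' s1 b])
      show "card J' < card J" unfolding J'_def using j(1) less.prems(1) by (metis card_Diff1_less)
      show "finite J'" unfolding J'_def using less.prems(1) by simp
      show "s1 \<le> b" by fact
      show "continuous_on {s1..b} h" using less.prems(3) continuous_on_subset s1 by fastforce
      show "\<forall>j\<in>J'. continuous_on {s1..b} (H j)" using less.prems(4) continuous_on_subset s1
        unfolding J'_def by (metis DiffD1 atLeastatMost_subset_iff order_refl)
      show "\<forall>j\<in>J'. \<forall>s\<in>{s1..b}. \<forall>s'\<in>{s1..b}. norm (H j s - H j s') \<le> K * \<bar>s - s'\<bar>"
        using less.prems(5) s1 unfolding J'_def by auto
      show "\<forall>s\<in>{s1..b}. \<exists>j\<in>J'. h s = H j s" using sub unfolding A'_def by auto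
    qed
    have "norm (h b - h a) \<le> norm (h b - h s1) + norm (h s1 - h a)"
      by (rule order_trans[OF _ norm_triangle_ineq]) simp
    also have "\<dots> \<le> K * (b - s1) + K * (s1 - a)" using IH part1 by simp
    finally show ?thesis by (simp add: algebra_simps)
  qed
qed

lemma taylor2_real:
  fixes \<phi> \<phi>1 \<phi>2 :: "real \<Rightarrow> 'b::real_normed_vector"
  assumes t0: "0 \<le> t"
    and d1: "\<And>s. s \<in> {0..t} \<Longrightarrow> (\<phi> has_vector_derivative \<phi>1 s) (at s within {0..t})"
    and d2: "\<And>s. s \<in> {0..t} \<Longrightarrow> (\<phi>1 has_vector_derivative \<phi>2 s) (at s within {0..t})"
    and bd: "\<And>s. s \<in> {0..t} \<Longrightarrow> norm (\<phi>2 s - \<phi>2 0) \<le> B"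
  shows "norm (\<phi> t - \<phi> 0 - t *\<^sub>R \<phi>1 0 - ((1/2) * t\<^sup>2) *\<^sub>R \<phi>2 0) \<le> B * t\<^sup>2"
proof -
  have seg: "closed_segment u v \<subseteq> {0..t}" if "u \<in> {0..t}" "v \<in> {0..t}" for u v
    using that by (intro closed_segment_subset) auto
  have z: "(0::real) \<in> {0..t}" using t0 by simp
  have B0: "0 \<le> B" using bd[OF z] by simp
  have B1: "norm (\<phi>1 s - \<phi>1 0 - s *\<^sub>R \<phi>2 0) \<le> s * B" if s: "s \<in> {0..t}" for s
  proof -
    have "norm (\<phi>1 s - \<phi>1 0 - (s - 0) *\<^sub>R \<phi>2 0) \<le> norm (s - 0) * B"
      by (rule vector_differentiable_bound_linearization[where f=\<phi>1 and f'=\<phi>2 and S="{0..t}" and a=0 and b=s and B=B and ?x0.0=0])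
         (use d2 seg[OF z s] bd z in auto)
    then show ?thesis using s by simp
  qed
  define \<psi> where "\<psi> s = \<phi> s - ((1/2) * s\<^sup>2) *\<^sub>R \<phi>2 0" for s
  define \<psi>1 where "\<psi>1 s = \<phi>1 s - s *\<^sub>R \<phi>2 0" for s
  have d\<psi>: "(\<psi> has_vector_derivative \<psi>1 s) (at s within {0..t})" if "s \<in> {0..t}" for s
  proof -
    have r: "((\<lambda>s. (1/2) * s\<^sup>2) has_real_derivative s) (at s within {0..t})"
      by (auto intro!: derivative_eq_intros)
    have "((\<lambda>s. ((1/2) * s\<^sup>2) *\<^sub>R \<phi>2 0) has_vector_derivative
            (((1/2) * s\<^sup>2) *\<^sub>R 0 + s *\<^sub>R \<phi>2 0)) (at s within {0..t})"
      by (rule has_vector_derivative_scaleR[OF r has_vector_derivative_const])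
    then have "((\<lambda>s. ((1/2) * s\<^sup>2) *\<^sub>R \<phi>2 0) has_vector_derivative (s *\<^sub>R \<phi>2 0)) (at s within {0..t})"
      by simp
    from has_vector_derivative_diff[OF d1[OF that] this]
    show ?thesis unfolding \<psi>_def \<psi>1_def .
  qed
  have b\<psi>: "norm (\<psi>1 s - \<psi>1 0) \<le> t * B" if s: "s \<in> {0..t}" for s
  proof -
    have "norm (\<psi>1 s - \<psi>1 0) \<le> s * B" using B1[OF s] unfolding \<psi>1_def by (simp add: algebra_simps)
    moreover have "s * B \<le> t * B" using B0 s by (simp add: mult_right_mono)
    ultimately show ?thesis by linarith
  qed
  have A: "norm (\<psi> t - \<psi> 0 - (t - 0) *\<^sub>R \<psi>1 0) \<le> norm (t - 0) * (t * B)"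
    by (rule vector_differentiable_bound_linearization[where f=\<psi> and f'=\<psi>1 and S="{0..t}" and a=0 and b=t and B="t * B" and ?x0.0=0])
       (use d\<psi> seg[OF z] b\<psi> z t0 in auto)
  have E: "\<psi> t - \<psi> 0 - (t - 0) *\<^sub>R \<psi>1 0 = \<phi> t - \<phi> 0 - t *\<^sub>R \<phi>1 0 - ((1/2) * t\<^sup>2) *\<^sub>R \<phi>2 0"
    unfolding \<psi>_def \<psi>1_def by (simp add: algebra_simps)
  have C: "norm (t - 0) * (t * B) = B * t\<^sup>2" using t0 by (simp add: power2_eq_square)
  show ?thesis using A unfolding E C .
qed

definition pth :: "'a::real_vector \<Rightarrow> 'a \<Rightarrow> 'a \<Rightarrow> real \<Rightarrow> 'a" where
  "pth x d W s = x + s *\<^sub>R d + ((1/2) * s\<^sup>2) *\<^sub>R W"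

lemma pth_deriv: "((pth x d W) has_vector_derivative (d + s *\<^sub>R W)) (at s within S)"
  unfolding pth_def by (auto intro!: derivative_eq_intros)

lemma pth_0[simp]: "pth x d W 0 = x" by (simp add: pth_def)

lemma chain_vec:
  assumes "(f has_derivative blinfun_apply A) (at (p s))"
    and "(p has_vector_derivative v) (at s within S)"
  shows "((\<lambda>s. f (p s)) has_vector_derivative A v) (at s within S)"
proof -
  have "((\<lambda>s. f (p s)) has_derivative (\<lambda>h. A (h *\<^sub>R v))) (at s within S)"
    using has_derivative_compose[OF assms(2)[unfolded has_vector_derivative_def] assms(1)] .
  then show ?thesis unfolding has_vector_derivative_def by (simp add: blinfun.scaleR_right)
qed

locale pc2_loc =
  fixes g :: "'a::euclidean_space \<Rightarrow> 'b::euclidean_space" and x :: 'a and F :: "('a \<Rightarrow> 'b) set"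
    and D1 :: "('a \<Rightarrow> 'b) \<Rightarrow> 'a \<Rightarrow> ('a \<Rightarrow>\<^sub>L 'b)"
    and D2 :: "('a \<Rightarrow> 'b) \<Rightarrow> 'a \<Rightarrow> ('a \<Rightarrow>\<^sub>L ('a \<Rightarrow>\<^sub>L 'b))"
    and \<rho> K M :: real
  assumes finF: "finite F" and \<rho>: "\<rho> > 0"
    and sel: "\<And>y. y \<in> ball x \<rho> \<Longrightarrow> \<exists>f\<in>F. g y = f y"
    and fx: "\<And>f. f \<in> F \<Longrightarrow> f x = g x"
    and gc: "continuous_on (ball x \<rho>) g"
    and d1: "\<And>f y. f \<in> F \<Longrightarrow> y \<in> ball x \<rho> \<Longrightarrow> (f has_derivative blinfun_apply (D1 f y)) (at y)"
    and d2: "\<And>f y. f \<in> F \<Longrightarrow> y \<in> ball x \<rho> \<Longrightarrow> (D1 f has_derivative blinfun_apply (D2 f y)) (at y)"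
    and c2: "\<And>f. f \<in> F \<Longrightarrow> continuous_on (ball x \<rho>) (D2 f)"
    and bD1: "\<And>f y. f \<in> F \<Longrightarrow> y \<in> ball x \<rho> \<Longrightarrow> norm (D1 f y) \<le> K"
    and bD2: "\<And>f y. f \<in> F \<Longrightarrow> y \<in> ball x \<rho> \<Longrightarrow> norm (D2 f y) \<le> M"
begin

lemma x_in: "x \<in> ball x \<rho>" using \<rho> by simp

lemma F_ne: "F \<noteq> {}" using sel[OF x_in] by auto

lemma K0: "0 \<le> K" using F_ne bD1[OF _ x_in] norm_ge_zero order_trans by blast
lemma M0: "0 \<le> M" using F_ne bD2[OF _ x_in] norm_ge_zero order_trans by blast

lemma piece_lip:
  assumes "f \<in> F" "y \<in> ball x \<rho>" "z \<in> ball x \<rho>"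
  shows "norm (f y - f z) \<le> K * norm (y - z)"
proof (rule differentiable_bound[where S="ball x \<rho>" and f'="\<lambda>y. blinfun_apply (D1 f y)"])
  show "convex (ball x \<rho>)" by simp
  fix w assume w: "w \<in> ball x \<rho>"
  show "(f has_derivative blinfun_apply (D1 f w)) (at w within ball x \<rho>)"
    by (rule has_derivative_at_withinI) (rule d1[OF assms(1) w])
  have "norm (D1 f w) \<le> K" by (rule bD1[OF assms(1) w])
  then show "onorm (blinfun_apply (D1 f w)) \<le> K" by (simp add: norm_blinfun.rep_eq)
qed (use assms in auto)

lemma D1_lip:
  assumes "f \<in> F" "y \<in> ball x \<rho>" "z \<in> ball x \<rho>"
  shows "norm (D1 f y - D1 f z) \<le> M * norm (y - z)"
proof (rule differentiable_bound[where S="ball x \<rho>" and f'="\<lambda>y. blinfun_apply (D2 f y)"])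
  show "convex (ball x \<rho>)" by simp
  fix w assume w: "w \<in> ball x \<rho>"
  show "(D1 f has_derivative blinfun_apply (D2 f w)) (at w within ball x \<rho>)"
    by (rule has_derivative_at_withinI) (rule d2[OF assms(1) w])
  have "norm (D2 f w) \<le> M" by (rule bD2[OF assms(1) w])
  then show "onorm (blinfun_apply (D2 f w)) \<le> M" by (simp add: norm_blinfun.rep_eq)
qed (use assms in auto)

lemma g_lip:
  assumes "y \<in> ball x \<rho>" "z \<in> ball x \<rho>"
  shows "norm (g z - g y) \<le> K * norm (z - y)"
proof -
  define u where "u = z - y"
  have inb: "y + s *\<^sub>R u \<in> ball x \<rho>" if "s \<in> {0..1}" for s
  proof -
    have "y + s *\<^sub>R u = (1 - s) *\<^sub>R y + s *\<^sub>R z" unfolding u_def by (simp add: algebra_simps)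
    then show ?thesis using convex_ball[of x \<rho>] assms that unfolding convex_def by auto
  qed
  have lc: "continuous_on {0..1} (\<lambda>s. y + s *\<^sub>R u)" by (intro continuous_intros)
  have li: "(\<lambda>s. y + s *\<^sub>R u) ` {0..1} \<subseteq> ball x \<rho>" using inb by auto
  have "norm ((\<lambda>s. g (y + s *\<^sub>R u)) 1 - (\<lambda>s. g (y + s *\<^sub>R u)) 0) \<le> (K * norm u) * (1 - 0)"
  proof (rule sel_lipschitz[where J=F and H="\<lambda>f s. f (y + s *\<^sub>R u)"])
    show "finite F" by (rule finF)
    show "(0::real) \<le> 1" by simp
    show "continuous_on {0..1} (\<lambda>s. g (y + s *\<^sub>R u))"
      by (rule continuous_on_compose2[OF gc lc li])
    show "\<forall>f\<in>F. continuous_on {0..1} (\<lambda>s. f (y + s *\<^sub>R u))"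
    proof
      fix f assume f: "f \<in> F"
      have "continuous_on (ball x \<rho>) f"
        by (rule continuous_at_imp_continuous_on) (use d1[OF f] has_derivative_continuous in blast)
      then show "continuous_on {0..1} (\<lambda>s. f (y + s *\<^sub>R u))"
        by (rule continuous_on_compose2[OF _ lc li])
    qed
    show "\<forall>f\<in>F. \<forall>s\<in>{0..1}. \<forall>s'\<in>{0..1}. norm (f (y + s *\<^sub>R u) - f (y + s' *\<^sub>R u)) \<le> (K * norm u) * \<bar>s - s'\<bar>"
    proof (intro ballI)
      fix f s s' assume fF: "f \<in> F" and sI: "s \<in> {0..1::real}" and s'I: "s' \<in> {0..1::real}"
      have "norm (f (y + s *\<^sub>R u) - f (y + s' *\<^sub>R u)) \<le> K * norm ((y + s *\<^sub>R u) - (y + s' *\<^sub>R u))"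
        by (rule piece_lip[OF fF inb[OF sI] inb[OF s'I]])
      also have "norm ((y + s *\<^sub>R u) - (y + s' *\<^sub>R u)) = \<bar>s - s'\<bar> * norm u"
        by (simp add: scaleR_diff_left[symmetric])
      finally show "norm (f (y + s *\<^sub>R u) - f (y + s' *\<^sub>R u)) \<le> (K * norm u) * \<bar>s - s'\<bar>"
        by (simp add: ac_simps)
    qed
    show "\<forall>s\<in>{0..1}. \<exists>f\<in>F. g (y + s *\<^sub>R u) = f (y + s *\<^sub>R u)"
    proof
      fix s :: real assume "s \<in> {0..1}"
      show "\<exists>f\<in>F. g (y + s *\<^sub>R u) = f (y + s *\<^sub>R u)" by (rule sel[OF inb[OF \<open>s \<in> {0..1}\<close>]])
    qed
  qed
  then show ?thesis unfolding u_def by simp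
qed

lemma lipschitz_at: "locally_lipschitz_at g x"
  unfolding locally_lipschitz_at_def
proof (intro exI conjI)
  show "K-lipschitz_on (ball x \<rho>) g"
    by (rule lipschitz_onI) (use g_lip K0 in \<open>auto simp: dist_norm\<close>)
qed (rule \<rho>)


lemma norm2: "norm (blinfun_apply (blinfun_apply A u) v) \<le> norm A * norm u * norm v"
proof -
  have "norm (blinfun_apply (blinfun_apply A u) v) \<le> norm (blinfun_apply A u) * norm v"
    by (rule norm_blinfun)
  also have "\<dots> \<le> (norm A * norm u) * norm v"
    by (rule mult_right_mono[OF norm_blinfun]) simp
  finally show ?thesis .
qed

lemma piece_taylor:
  assumes f: "f \<in> F" and t: "0 \<le> t" and inb: "\<And>s. s \<in> {0..t} \<Longrightarrow> pth x d W s \<in> ball x \<rho>"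
    and bd: "\<And>s. s \<in> {0..t} \<Longrightarrow> norm ((D1 f (pth x d W s) W + D2 f (pth x d W s) (d + s *\<^sub>R W) (d + s *\<^sub>R W))
               - (D1 f x W + D2 f x d d)) \<le> B"
  shows "norm (f (pth x d W t) - g x - t *\<^sub>R D1 f x d - ((1/2) * t\<^sup>2) *\<^sub>R (D1 f x W + D2 f x d d)) \<le> B * t\<^sup>2"
proof -
  have dphi: "((\<lambda>s. f (pth x d W s)) has_vector_derivative D1 f (pth x d W s) (d + s *\<^sub>R W)) (at s within {0..t})"
    if "s \<in> {0..t}" for s
    by (rule chain_vec[where p="pth x d W" and s=s, OF d1[OF f inb[OF that]] pth_deriv])
  have dphi1: "((\<lambda>s. D1 f (pth x d W s) (d + s *\<^sub>R W)) has_vector_derivative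
      (D1 f (pth x d W s) W + D2 f (pth x d W s) (d + s *\<^sub>R W) (d + s *\<^sub>R W))) (at s within {0..t})"
    if "s \<in> {0..t}" for s
  proof -
    have A: "((\<lambda>s. D1 f (pth x d W s)) has_vector_derivative D2 f (pth x d W s) (d + s *\<^sub>R W)) (at s within {0..t})"
      by (rule chain_vec[where p="pth x d W" and s=s, OF d2[OF f inb[OF that]] pth_deriv])
    have V: "((\<lambda>s. d + s *\<^sub>R W) has_vector_derivative W) (at s within {0..t})"
      by (auto intro!: derivative_eq_intros)
    show ?thesis using bounded_bilinear.has_vector_derivative[OF bounded_bilinear_blinfun_apply A V] by simp
  qed
  have e: "D1 f x W + D2 f x d d = D1 f (pth x d W 0) W + D2 f (pth x d W 0) (d + 0 *\<^sub>R W) (d + 0 *\<^sub>R W)"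
    by simp
  have "norm (f (pth x d W t) - f (pth x d W 0) - t *\<^sub>R D1 f (pth x d W 0) (d + 0 *\<^sub>R W)
      - ((1/2) * t\<^sup>2) *\<^sub>R (D1 f (pth x d W 0) W + D2 f (pth x d W 0) (d + 0 *\<^sub>R W) (d + 0 *\<^sub>R W))) \<le> B * t\<^sup>2"
    by (rule taylor2_real[where \<phi>="\<lambda>s. f (pth x d W s)" and ?\<phi>1.0="\<lambda>s. D1 f (pth x d W s) (d + s *\<^sub>R W)"
        and ?\<phi>2.0="\<lambda>s. D1 f (pth x d W s) W + D2 f (pth x d W s) (d + s *\<^sub>R W) (d + s *\<^sub>R W)" and B=B,
        OF t dphi dphi1 bd[unfolded e]])
  then show ?thesis using fx[OF f] by simp
qed

end

context pc2_loc begin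
lemma phi2_bound:
  assumes f: "f \<in> F" and s: "0 \<le> s" and inb: "pth x d W s \<in> ball x \<rho>"
    and e1: "norm (D2 f (pth x d W s) - D2 f x) \<le> e1" and sa: "s * norm W \<le> a"
  shows "norm ((D1 f (pth x d W s) W + D2 f (pth x d W s) (d + s *\<^sub>R W) (d + s *\<^sub>R W))
               - (D1 f x W + D2 f x d d))
         \<le> e1 * (norm d + a)\<^sup>2 + M * a * (2 * norm d + a) + M * (norm d * a + a * a)"
proof -
  define y where "y = pth x d W s"
  define v where "v = d + s *\<^sub>R W"
  have a0: "0 \<le> a" using sa s by (meson mult_nonneg_nonneg norm_ge_zero order_trans)
  have e10: "0 \<le> e1" using e1 norm_ge_zero order_trans by blast
  have eq: "(D1 f y W + D2 f y v v) - (D1 f x W + D2 f x d d)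
      = (D1 f y - D1 f x) W + ((D2 f y - D2 f x) v v + D2 f x (v - d) v + D2 f x d (v - d))"
    by (simp add: blinfun.diff_left blinfun.diff_right algebra_simps)
  have nv: "norm v \<le> norm d + a"
    unfolding v_def using norm_triangle_ineq[of d "s *\<^sub>R W"] sa s by simp
  have nvd: "norm (v - d) \<le> a" unfolding v_def using sa s by simp
  have nyx: "norm (y - x) * norm W \<le> norm d * a + a * a"
  proof -
    have "norm (y - x) \<le> s * norm d + ((1/2) * s\<^sup>2) * norm W"
      unfolding y_def pth_def using norm_triangle_ineq[of "s *\<^sub>R d" "((1/2) * s\<^sup>2) *\<^sub>R W"] s by simp
    then have "norm (y - x) * norm W \<le> (s * norm d + ((1/2) * s\<^sup>2) * norm W) * norm W"
      by (simp add: mult_right_mono)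
    also have "\<dots> = norm d * (s * norm W) + (1/2) * ((s * norm W) * (s * norm W))"
      by (simp add: algebra_simps power2_eq_square)
    also have "\<dots> \<le> norm d * a + (1/2) * (a * a)"
    proof -
      have q1: "norm d * (s * norm W) \<le> norm d * a" using sa by (simp add: mult_left_mono)
      have q2: "(s * norm W) * (s * norm W) \<le> a * a" by (rule mult_mono) (use sa s a0 in auto)
      show ?thesis using q1 q2 by linarith
    qed
    also have "\<dots> \<le> norm d * a + a * a" using a0 by simp
    finally show ?thesis .
  qed
  have N1: "norm ((D1 f y - D1 f x) W) \<le> M * (norm d * a + a * a)"
  proof -
    have "norm ((D1 f y - D1 f x) W) \<le> norm (D1 f y - D1 f x) * norm W" by (rule norm_blinfun)
    also have "\<dots> \<le> (M * norm (y - x)) * norm W"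
      using D1_lip[OF f _ x_in] inb unfolding y_def by (simp add: mult_right_mono)
    also have "\<dots> \<le> M * (norm d * a + a * a)" using nyx M0 by (simp add: mult.assoc mult_left_mono)
    finally show ?thesis .
  qed
  have N2: "norm ((D2 f y - D2 f x) v v) \<le> e1 * (norm d + a)\<^sup>2"
  proof -
    have "norm ((D2 f y - D2 f x) v v) \<le> norm (D2 f y - D2 f x) * norm v * norm v" by (rule norm2)
    also have "\<dots> \<le> e1 * (norm d + a) * (norm d + a)"
      using e1 nv unfolding y_def by (intro mult_mono) (auto simp: e10 a0)
    finally show ?thesis by (simp add: power2_eq_square)
  qed
  have N3: "norm (D2 f x (v - d) v) \<le> M * a * (norm d + a)"
  proof -
    have "norm (D2 f x (v - d) v) \<le> norm (D2 f x) * norm (v - d) * norm v" by (rule norm2)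
    also have "\<dots> \<le> M * a * (norm d + a)"
      using bD2[OF f x_in] nvd nv M0 a0 by (intro mult_mono) auto
    finally show ?thesis .
  qed
  have N4: "norm (D2 f x d (v - d)) \<le> M * norm d * a"
  proof -
    have "norm (D2 f x d (v - d)) \<le> norm (D2 f x) * norm d * norm (v - d)" by (rule norm2)
    also have "\<dots> \<le> M * norm d * a"
      using bD2[OF f x_in] nvd M0 a0 by (intro mult_mono) auto
    finally show ?thesis .
  qed
  have T1: "norm ((D1 f y - D1 f x) W + ((D2 f y - D2 f x) v v + D2 f x (v - d) v + D2 f x d (v - d)))
      \<le> norm ((D1 f y - D1 f x) W) + norm ((D2 f y - D2 f x) v v + D2 f x (v - d) v + D2 f x d (v - d))"
    by (rule norm_triangle_ineq)
  have T2: "norm ((D2 f y - D2 f x) v v + D2 f x (v - d) v + D2 f x d (v - d))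
      \<le> norm ((D2 f y - D2 f x) v v + D2 f x (v - d) v) + norm (D2 f x d (v - d))"
    by (rule norm_triangle_ineq)
  have T3: "norm ((D2 f y - D2 f x) v v + D2 f x (v - d) v)
      \<le> norm ((D2 f y - D2 f x) v v) + norm (D2 f x (v - d) v)"
    by (rule norm_triangle_ineq)
  have "norm ((D1 f y W + D2 f y v v) - (D1 f x W + D2 f x d d))
      \<le> norm ((D1 f y - D1 f x) W) + (norm ((D2 f y - D2 f x) v v) + norm (D2 f x (v - d) v) + norm (D2 f x d (v - d)))"
    unfolding eq using T1 T2 T3 by linarith
  also have "\<dots> \<le> M * (norm d * a + a * a) + (e1 * (norm d + a)\<^sup>2 + M * a * (norm d + a) + M * norm d * a)"
    using N1 N2 N3 N4 by linarith
  also have "\<dots> = e1 * (norm d + a)\<^sup>2 + M * a * (2 * norm d + a) + M * (norm d * a + a * a)"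
    by (simp add: algebra_simps)
  finally show ?thesis unfolding y_def v_def .
qed

end

lemma pth_norm:
  fixes x d W :: "'a::real_normed_vector"
  assumes "0 \<le> s" "s \<le> t"
  shows "norm (pth x d W s - x) \<le> t * norm d + t * (t * norm W)"
proof -
  have "norm (pth x d W s - x) \<le> s * norm d + ((1/2) * s\<^sup>2) * norm W"
    unfolding pth_def using norm_triangle_ineq[of "s *\<^sub>R d" "((1/2) * s\<^sup>2) *\<^sub>R W"] assms(1) by simp
  also have "s * norm d \<le> t * norm d" using assms by (simp add: mult_right_mono)
  moreover have "((1/2) * s\<^sup>2) * norm W \<le> t * (t * norm W)"
  proof -
    have "s * s \<le> t * t" by (rule mult_mono) (use assms in auto)
    then have "s\<^sup>2 * norm W \<le> (t * t) * norm W" by (simp add: power2_eq_square mult_right_mono)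
    then have A: "s\<^sup>2 * norm W \<le> t * (t * norm W)" by (simp add: mult.assoc)
    have "0 \<le> s\<^sup>2 * norm W" by simp
    then have B: "(1/2) * s\<^sup>2 * norm W \<le> s\<^sup>2 * norm W" by simp
    from A B show ?thesis by linarith
  qed
  ultimately show ?thesis by linarith
qed

context pc2_loc begin

lemma ET:
  fixes w :: "real \<Rightarrow> 'a" and d :: 'a
  assumes w: "((\<lambda>t. t *\<^sub>R w t) \<longlongrightarrow> 0) (at_right 0)" and e: "\<epsilon> > 0"
  shows "\<forall>\<^sub>F t in at_right 0. 0 < t \<and> t < 1 \<and> (\<forall>\<tau>\<in>{0<..t}. pth x d (w t) \<tau> \<in> ball x \<rho>) \<and>
      (\<forall>f\<in>F. t * norm (D1 f x (w t) + D2 f x d d) \<le> \<epsilon>) \<and>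
      (\<forall>f\<in>F. \<forall>\<tau>\<in>{0<..t}. norm (f (pth x d (w t) \<tau>) - g x - \<tau> *\<^sub>R D1 f x d
          - ((1/2) * \<tau>\<^sup>2) *\<^sub>R (D1 f x (w t) + D2 f x d d)) \<le> \<epsilon> * \<tau>\<^sup>2)"
proof -
  define a where "a t = t * norm (w t)" for t
  have a: "(a \<longlongrightarrow> 0) (at_right 0)"
  proof -
    have "((\<lambda>t. norm (t *\<^sub>R w t)) \<longlongrightarrow> 0) (at_right 0)" using tendsto_norm[OF w] by simp
    moreover have "\<forall>\<^sub>F t in at_right 0. norm (t *\<^sub>R w t) = a t"
      unfolding a_def eventually_at_right_field by (intro exI[of _ 1]) auto
    ultimately show ?thesis by (rule Lim_transform_eventually)
  qed
  define \<epsilon>1 where "\<epsilon>1 = \<epsilon> / (2 * ((norm d)\<^sup>2 + 1))"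
  have dpos: "0 < 2 * ((norm d)\<^sup>2 + 1)"
    using add_nonneg_pos[OF zero_le_power2[of "norm d"] zero_less_one] by simp
  have \<epsilon>1: "\<epsilon>1 > 0" unfolding \<epsilon>1_def using e dpos by (rule divide_pos_pos)
  have \<epsilon>1d: "\<epsilon>1 * (norm d)\<^sup>2 < \<epsilon>"
  proof -
    have "\<epsilon>1 * (norm d)\<^sup>2 \<le> \<epsilon>1 * ((norm d)\<^sup>2 + 1)" using \<epsilon>1 by simp
    also have "\<dots> = \<epsilon> / 2" unfolding \<epsilon>1_def using dpos by (simp add: field_simps)
    finally show ?thesis using e by simp
  qed
  obtain \<delta> where \<delta>: "\<delta> > 0" and \<delta>b: "\<And>f y. f \<in> F \<Longrightarrow> norm (y - x) < \<delta> \<Longrightarrow> norm (D2 f y - D2 f x) \<le> \<epsilon>1"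
  proof -
    have "\<forall>f\<in>F. \<forall>\<^sub>F y in at x. dist (D2 f y) (D2 f x) < \<epsilon>1"
    proof
      fix f assume f: "f \<in> F"
      have "isCont (D2 f) x" using c2[OF f] continuous_on_eq_continuous_at[OF open_ball] x_in by blast
      then show "\<forall>\<^sub>F y in at x. dist (D2 f y) (D2 f x) < \<epsilon>1"
        unfolding isCont_def using \<epsilon>1 by (rule tendstoD)
    qed
    then have "\<forall>\<^sub>F y in at x. \<forall>f\<in>F. dist (D2 f y) (D2 f x) < \<epsilon>1"
      by (rule eventually_ball_finite[OF finF])
    then obtain \<delta> where "\<delta> > 0" and \<delta>': "\<And>y. y \<noteq> x \<Longrightarrow> dist y x < \<delta> \<Longrightarrow> \<forall>f\<in>F. dist (D2 f y) (D2 f x) < \<epsilon>1"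
      unfolding eventually_at by (auto simp del: ball_simps)
    show thesis
    proof (rule that[OF \<open>\<delta> > 0\<close>])
      fix f y assume f: "f \<in> F" and y: "norm (y - x) < \<delta>"
      show "norm (D2 f y - D2 f x) \<le> \<epsilon>1"
      proof (cases "y = x")
        case True then show ?thesis using \<epsilon>1 by simp
      next
        case False then show ?thesis using \<delta>'[of y] f y by (auto simp: dist_norm)
      qed
    qed
  qed
  define \<delta>' where "\<delta>' = min \<delta> \<rho>"
  have \<delta>'0: "\<delta>' > 0" unfolding \<delta>'_def using \<delta> \<rho> by simp
  have ev1: "\<forall>\<^sub>F t in at_right 0. t * norm d + t * a t < \<delta>'"
  proof -
    have "((\<lambda>t. t * norm d + t * a t) \<longlongrightarrow> 0 * norm d + 0 * 0) (at_right 0)"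
      by (intro tendsto_intros a)
    then show ?thesis using \<delta>'0 by (intro order_tendstoD(2)) auto
  qed
  have ev2: "\<forall>\<^sub>F t in at_right 0. \<epsilon>1 * (norm d + a t)\<^sup>2 + M * a t * (2 * norm d + a t) + M * (norm d * a t + a t * a t) < \<epsilon>"
  proof -
    have "((\<lambda>t. \<epsilon>1 * (norm d + a t)\<^sup>2 + M * a t * (2 * norm d + a t) + M * (norm d * a t + a t * a t))
        \<longlongrightarrow> \<epsilon>1 * (norm d + 0)\<^sup>2 + M * 0 * (2 * norm d + 0) + M * (norm d * 0 + 0 * 0)) (at_right 0)"
      by (intro tendsto_intros a)
    then show ?thesis using \<epsilon>1d by (intro order_tendstoD(2)) auto
  qed
  have ev3: "\<forall>\<^sub>F t in at_right 0. K * a t + t * (M * (norm d * norm d)) < \<epsilon>"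
  proof -
    have "((\<lambda>t. K * a t + t * (M * (norm d * norm d))) \<longlongrightarrow> K * 0 + 0 * (M * (norm d * norm d))) (at_right 0)"
      by (intro tendsto_intros a)
    then show ?thesis using e by (intro order_tendstoD(2)) auto
  qed
  have ev4: "\<forall>\<^sub>F t in at_right (0::real). 0 < t \<and> t < 1"
    unfolding eventually_at_right_field by (intro exI[of _ 1]) auto
  show ?thesis
    using ev1 ev2 ev3 ev4
  proof eventually_elim
    case (elim t)
    then have t: "0 < t" "t < 1" and e1t: "t * norm d + t * a t < \<delta>'"
      and e2t: "\<epsilon>1 * (norm d + a t)\<^sup>2 + M * a t * (2 * norm d + a t) + M * (norm d * a t + a t * a t) < \<epsilon>"
      and e3t: "K * a t + t * (M * (norm d * norm d)) < \<epsilon>" by auto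
    define W where "W = w t"
    have pn: "norm (pth x d W s - x) < \<delta>'" if "0 \<le> s" "s \<le> t" for s
      using pth_norm[OF that, of x d W] e1t unfolding a_def W_def by simp
    have inb: "pth x d W s \<in> ball x \<rho>" if "0 \<le> s" "s \<le> t" for s
      using pn[OF that] unfolding \<delta>'_def by (simp add: dist_norm norm_minus_commute)
    have cb: "t * norm (D1 f x W + D2 f x d d) \<le> \<epsilon>" if f: "f \<in> F" for f
    proof -
      have "norm (D1 f x W + D2 f x d d) \<le> norm (D1 f x W) + norm (D2 f x d d)" by (rule norm_triangle_ineq)
      also have "norm (D1 f x W) \<le> K * norm W"
        using norm_blinfun[of "D1 f x" W] bD1[OF f x_in] by (meson mult_right_mono norm_ge_zero order_trans)
      moreover have "norm (D2 f x d d) \<le> M * (norm d * norm d)"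
        using norm2[of "D2 f x" d d] bD2[OF f x_in] mult_right_mono[of "norm (D2 f x)" M "norm d * norm d"]
        by (simp add: mult.assoc)
      ultimately have "norm (D1 f x W + D2 f x d d) \<le> K * norm W + M * (norm d * norm d)" by linarith
      then have "t * norm (D1 f x W + D2 f x d d) \<le> t * (K * norm W + M * (norm d * norm d))"
        using t by (simp add: mult_left_mono)
      also have "\<dots> = K * a t + t * (M * (norm d * norm d))" unfolding a_def W_def by (simp add: algebra_simps)
      finally show ?thesis using e3t by simp
    qed
    have tay: "norm (f (pth x d W \<tau>) - g x - \<tau> *\<^sub>R D1 f x d - ((1/2) * \<tau>\<^sup>2) *\<^sub>R (D1 f x W + D2 f x d d)) \<le> \<epsilon> * \<tau>\<^sup>2"
      if f: "f \<in> F" and \<tau>: "\<tau> \<in> {0<..t}" for f \<tau>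
    proof (rule piece_taylor[OF f])
      show "0 \<le> \<tau>" using \<tau> by simp
      show "pth x d W s \<in> ball x \<rho>" if "s \<in> {0..\<tau>}" for s using inb that \<tau> by auto
      fix s assume s: "s \<in> {0..\<tau>}"
      then have s0: "0 \<le> s" and st: "s \<le> t" using \<tau> by auto
      have "norm (D2 f (pth x d W s) - D2 f x) \<le> \<epsilon>1"
        using \<delta>b[OF f] pn[OF s0 st] unfolding \<delta>'_def by simp
      moreover have "s * norm W \<le> a t" unfolding a_def W_def using st by (simp add: mult_right_mono)
      ultimately have "norm ((D1 f (pth x d W s) W + D2 f (pth x d W s) (d + s *\<^sub>R W) (d + s *\<^sub>R W))
               - (D1 f x W + D2 f x d d))
         \<le> \<epsilon>1 * (norm d + a t)\<^sup>2 + M * a t * (2 * norm d + a t) + M * (norm d * a t + a t * a t)"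
        by (rule phi2_bound[OF f s0 inb[OF s0 st]])
      then show "norm ((D1 f (pth x d W s) W + D2 f (pth x d W s) (d + s *\<^sub>R W) (d + s *\<^sub>R W))
               - (D1 f x W + D2 f x d d)) \<le> \<epsilon>" using e2t by linarith
    qed
    show ?case using t inb cb tay unfolding W_def by auto
  qed
qed

end

lemma a_tendsto:
  fixes w :: "real \<Rightarrow> 'a::real_normed_vector"
  assumes w: "((\<lambda>t. t *\<^sub>R w t) \<longlongrightarrow> 0) (at_right 0)"
  shows "((\<lambda>t. t * norm (w t)) \<longlongrightarrow> 0) (at_right 0)"
proof -
  have "((\<lambda>t. norm (t *\<^sub>R w t)) \<longlongrightarrow> 0) (at_right 0)" using tendsto_norm[OF w] by simp
  moreover have "\<forall>\<^sub>F t in at_right 0. norm (t *\<^sub>R w t) = t * norm (w t)"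
    unfolding eventually_at_right_field by (intro exI[of _ 1]) auto
  ultimately show ?thesis by (rule Lim_transform_eventually)
qed

lemma eventually_all_right:
  assumes "eventually P (at_right (0::real))"
  shows "eventually (\<lambda>t. \<forall>\<tau>\<in>{0<..t}. P \<tau>) (at_right 0)"
proof -
  from assms obtain b where b: "b > 0" "\<And>\<tau>. 0 < \<tau> \<Longrightarrow> \<tau> < b \<Longrightarrow> P \<tau>"
    unfolding eventually_at_right_field by auto
  show ?thesis unfolding eventually_at_right_field
    by (rule exI[of _ b]) (use b in auto)
qed

lemma cluster_apply:
  fixes q :: "real \<Rightarrow> 'b::real_normed_vector" and cf :: "'c \<Rightarrow> 'b"
  assumes t: "0 < t" and qc: "continuous_on {0<..t} q" and fin: "finite F" and r: "0 \<le> r"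
    and near: "\<And>\<tau>. \<tau> \<in> {0<..t} \<Longrightarrow> \<exists>f\<in>F. dist (q \<tau>) (cf f) \<le> r"
  shows "\<forall>\<tau>\<in>{0<..t}. dist (q \<tau>) (q t) \<le> 3 ^ card F * r"
proof -
  have con: "connected {0<..t}" by (rule convex_connected) simp
  have nr: "\<forall>\<tau>\<in>{0<..t}. \<exists>c\<in>cf ` F. dist (q \<tau>) c \<le> r" using near by blast
  have A: "\<forall>\<tau>1\<in>{0<..t}. \<forall>\<tau>2\<in>{0<..t}. dist (q \<tau>1) (q \<tau>2) \<le> 3 ^ card (cf ` F) * r"
    by (rule cluster_diam[OF con qc finite_imageI[OF fin] r nr])
  have B: "3 ^ card (cf ` F) * r \<le> 3 ^ card F * r"
    by (rule mult_right_mono[OF power_increasing[OF card_image_le[OF fin]] r]) simp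
  have "t \<in> {0<..t}" using t by simp
  then show ?thesis using A B by (meson order_trans)
qed

lemma q1_near:
  fixes y gx b c :: "'b::real_normed_vector"
  assumes tau: "0 < \<tau>" "\<tau> \<le> t" "t < 1" and cb: "t * norm c \<le> e"
    and tay: "norm (y - gx - \<tau> *\<^sub>R b - ((1/2) * \<tau>\<^sup>2) *\<^sub>R c) \<le> e * \<tau>\<^sup>2"
  shows "dist ((y - gx) /\<^sub>R \<tau>) b \<le> 2 * e"
proof -
  have "0 \<le> t * norm c" using tau by simp
  then have e0: "0 \<le> e" using cb by linarith
  have k1: "inverse \<tau> *\<^sub>R (\<tau> *\<^sub>R b) = b" using tau by simp
  have k0: "inverse \<tau> * ((1/2) * \<tau>\<^sup>2) = (1/2) * \<tau>" using tau by (simp add: power2_eq_square field_simps)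
  have k2: "inverse \<tau> *\<^sub>R (((1/2) * \<tau>\<^sup>2) *\<^sub>R c) = ((1/2) * \<tau>) *\<^sub>R c"
    by (simp only: scaleR_scaleR k0)
  have eq: "(y - gx) /\<^sub>R \<tau> - b = (1/\<tau>) *\<^sub>R (y - gx - \<tau> *\<^sub>R b - ((1/2) * \<tau>\<^sup>2) *\<^sub>R c) + ((1/2) * \<tau>) *\<^sub>R c"
  proof -
    have "(1/\<tau>) *\<^sub>R (y - gx - \<tau> *\<^sub>R b - ((1/2) * \<tau>\<^sup>2) *\<^sub>R c)
        = inverse \<tau> *\<^sub>R (y - gx) - inverse \<tau> *\<^sub>R (\<tau> *\<^sub>R b) - inverse \<tau> *\<^sub>R (((1/2) * \<tau>\<^sup>2) *\<^sub>R c)"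
      by (simp only: scaleR_diff_right inverse_eq_divide) 
    also have "\<dots> = inverse \<tau> *\<^sub>R (y - gx) - b - ((1/2) * \<tau>) *\<^sub>R c" by (simp only: k1 k2)
    finally show ?thesis by simp
  qed
  have n1: "norm ((1/\<tau>) *\<^sub>R (y - gx - \<tau> *\<^sub>R b - ((1/2) * \<tau>\<^sup>2) *\<^sub>R c)) \<le> e"
  proof -
    have "norm ((1/\<tau>) *\<^sub>R (y - gx - \<tau> *\<^sub>R b - ((1/2) * \<tau>\<^sup>2) *\<^sub>R c))
        = (1/\<tau>) * norm (y - gx - \<tau> *\<^sub>R b - ((1/2) * \<tau>\<^sup>2) *\<^sub>R c)" using tau by simp
    also have "\<dots> \<le> (1/\<tau>) * (e * \<tau>\<^sup>2)" using tay tau by (intro mult_left_mono) auto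
    also have "\<dots> = e * \<tau>" using tau by (simp add: power2_eq_square)
    also have "\<dots> \<le> e * 1" using tau e0 by (intro mult_left_mono) auto
    finally show ?thesis by simp
  qed
  have n2: "norm (((1/2) * \<tau>) *\<^sub>R c) \<le> e"
  proof -
    have A: "norm (((1/2) * \<tau>) *\<^sub>R c) = (1/2) * (\<tau> * norm c)" using tau by simp
    have "\<tau> * norm c \<le> t * norm c" using tau by (simp add: mult_right_mono)
    then show ?thesis unfolding A using cb e0 by linarith
  qed
  have "dist ((y - gx) /\<^sub>R \<tau>) b = norm ((y - gx) /\<^sub>R \<tau> - b)" by (simp add: dist_norm)
  also have "\<dots> \<le> norm ((1/\<tau>) *\<^sub>R (y - gx - \<tau> *\<^sub>R b - ((1/2) * \<tau>\<^sup>2) *\<^sub>R c)) + norm (((1/2) * \<tau>) *\<^sub>R c)"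
    unfolding eq by (rule norm_triangle_ineq)
  also have "\<dots> \<le> 2 * e" using n1 n2 by linarith
  finally show ?thesis .
qed

lemma q2_near:
  fixes y gx b c :: "'b::real_normed_vector"
  assumes tau: "0 < \<tau>"
    and tay: "norm (y - gx - \<tau> *\<^sub>R b - ((1/2) * \<tau>\<^sup>2) *\<^sub>R c) \<le> e * \<tau>\<^sup>2"
  shows "dist ((y - gx - \<tau> *\<^sub>R b) /\<^sub>R ((1/2) * \<tau>\<^sup>2)) c \<le> 2 * e"
proof -
  have t2: "0 < (1/2) * \<tau>\<^sup>2" using tau by simp
  have eq: "(y - gx - \<tau> *\<^sub>R b) /\<^sub>R ((1/2) * \<tau>\<^sup>2) - c
      = inverse ((1/2) * \<tau>\<^sup>2) *\<^sub>R (y - gx - \<tau> *\<^sub>R b - ((1/2) * \<tau>\<^sup>2) *\<^sub>R c)"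
    using t2 by (simp add: scaleR_diff_right)
  have "dist ((y - gx - \<tau> *\<^sub>R b) /\<^sub>R ((1/2) * \<tau>\<^sup>2)) c
      = inverse ((1/2) * \<tau>\<^sup>2) * norm (y - gx - \<tau> *\<^sub>R b - ((1/2) * \<tau>\<^sup>2) *\<^sub>R c)"
    unfolding dist_norm eq using t2 by simp
  also have "\<dots> \<le> inverse ((1/2) * \<tau>\<^sup>2) * (e * \<tau>\<^sup>2)"
    using tay t2 by (intro mult_left_mono) auto
  also have "\<dots> = 2 * e" using tau by (simp add: field_simps)
  finally show ?thesis .
qed

context pc2_loc begin

lemma cont_G:
  assumes "\<forall>\<tau>\<in>{0<..t}. pth x d W \<tau> \<in> ball x \<rho>"
  shows "continuous_on {0<..t} (\<lambda>\<tau>. g (pth x d W \<tau>))"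
proof (rule continuous_on_compose2[OF gc])
  show "continuous_on {0<..t} (pth x d W)" unfolding pth_def by (intro continuous_intros)
  show "pth x d W ` {0<..t} \<subseteq> ball x \<rho>" using assms by auto
qed

lemma FO:
  assumes w: "((\<lambda>t. t *\<^sub>R w t) \<longlongrightarrow> 0) (at_right 0)" and e: "\<epsilon> > 0"
  shows "\<forall>\<^sub>F t in at_right 0. \<forall>\<tau>\<in>{0<..t}.
     dist ((g (pth x d (w t) \<tau>) - g x) /\<^sub>R \<tau>) ((g (pth x d (w t) t) - g x) /\<^sub>R t) \<le> \<epsilon>"
proof -
  define e' where "e' = \<epsilon> / (2 * 3 ^ card F)"
  have e': "e' > 0" unfolding e'_def using e by simp
  have eq: "3 ^ card F * (2 * e') = \<epsilon>" unfolding e'_def by simp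
  show ?thesis using ET[OF w e', of d]
  proof eventually_elim
    case (elim t)
    then have t: "0 < t" "t < 1" and inb: "\<forall>\<tau>\<in>{0<..t}. pth x d (w t) \<tau> \<in> ball x \<rho>"
      and cb: "\<forall>f\<in>F. t * norm (D1 f x (w t) + D2 f x d d) \<le> e'"
      and tay: "\<forall>f\<in>F. \<forall>\<tau>\<in>{0<..t}. norm (f (pth x d (w t) \<tau>) - g x - \<tau> *\<^sub>R D1 f x d
          - ((1/2) * \<tau>\<^sup>2) *\<^sub>R (D1 f x (w t) + D2 f x d d)) \<le> e' * \<tau>\<^sup>2" by auto
    have "\<forall>\<tau>\<in>{0<..t}. dist ((g (pth x d (w t) \<tau>) - g x) /\<^sub>R \<tau>) ((g (pth x d (w t) t) - g x) /\<^sub>R t)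
        \<le> 3 ^ card F * (2 * e')"
    proof (rule cluster_apply[where cf="\<lambda>f. D1 f x d" and q="\<lambda>\<tau>. (g (pth x d (w t) \<tau>) - g x) /\<^sub>R \<tau>", OF t(1) _ finF])
      show "continuous_on {0<..t} (\<lambda>\<tau>. (g (pth x d (w t) \<tau>) - g x) /\<^sub>R \<tau>)"
        using cont_G[OF inb] by (intro continuous_intros) auto
      show "0 \<le> 2 * e'" using e' by simp
      fix \<tau> assume \<tau>: "\<tau> \<in> {0<..t}"
      obtain f where f: "f \<in> F" "g (pth x d (w t) \<tau>) = f (pth x d (w t) \<tau>)" using sel inb \<tau> by blast
      have "dist ((f (pth x d (w t) \<tau>) - g x) /\<^sub>R \<tau>) (D1 f x d) \<le> 2 * e'"
        by (rule q1_near[where t=t]) (use \<tau> t cb tay f in auto)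
      then show "\<exists>f\<in>F. dist ((g (pth x d (w t) \<tau>) - g x) /\<^sub>R \<tau>) (D1 f x d) \<le> 2 * e'"
        using f by auto
    qed
    then show ?case unfolding eq .
  qed
qed

end

context pc2_loc begin

lemma pth_zero: "pth x d 0 \<tau> = x + \<tau> *\<^sub>R d" by (simp add: pth_def)

lemma path0: "((\<lambda>t::real. t *\<^sub>R (0::'a)) \<longlongrightarrow> 0) (at_right 0)" by simp

lemma FD: "((\<lambda>\<tau>. (g (x + \<tau> *\<^sub>R d) - g x) /\<^sub>R \<tau>) \<longlongrightarrow> dir_deriv g x d) (at_right 0)"
proof -
  have "\<forall>\<epsilon>>0. \<forall>\<^sub>F t in at_right 0. \<forall>\<tau>\<in>{0<..t}.
      dist ((g (x + \<tau> *\<^sub>R d) - g x) /\<^sub>R \<tau>) ((g (x + t *\<^sub>R d) - g x) /\<^sub>R t) \<le> \<epsilon>"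
  proof (intro allI impI)
    fix \<epsilon> :: real assume "\<epsilon> > 0"
    from FO[OF path0 this, where d=d]
    show "\<forall>\<^sub>F t in at_right 0. \<forall>\<tau>\<in>{0<..t}.
      dist ((g (x + \<tau> *\<^sub>R d) - g x) /\<^sub>R \<tau>) ((g (x + t *\<^sub>R d) - g x) /\<^sub>R t) \<le> \<epsilon>"
      by (simp only: pth_zero)
  qed
  from cauchy_right[OF this] obtain L where L: "((\<lambda>\<tau>. (g (x + \<tau> *\<^sub>R d) - g x) /\<^sub>R \<tau>) \<longlongrightarrow> L) (at_right 0)"
    by blast
  then have "dir_deriv g x d = L" unfolding dir_deriv_def by (intro tendsto_Lim) auto
  then show ?thesis using L by simp
qed

lemma BI:
  assumes w: "((\<lambda>t. t *\<^sub>R w t) \<longlongrightarrow> 0) (at_right 0)"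
  shows "\<forall>\<^sub>F t in at_right 0. \<forall>\<tau>\<in>{0<..t}. \<forall>f\<in>F.
     g (pth x d (w t) \<tau>) = f (pth x d (w t) \<tau>) \<longrightarrow> D1 f x d = dir_deriv g x d"
proof -
  define b where "b = dir_deriv g x d"
  have "\<forall>f\<in>F. \<forall>\<^sub>F t in at_right 0. \<forall>\<tau>\<in>{0<..t}. g (pth x d (w t) \<tau>) = f (pth x d (w t) \<tau>) \<longrightarrow> D1 f x d = b"
  proof
    fix f assume f: "f \<in> F"
    show "\<forall>\<^sub>F t in at_right 0. \<forall>\<tau>\<in>{0<..t}. g (pth x d (w t) \<tau>) = f (pth x d (w t) \<tau>) \<longrightarrow> D1 f x d = b"
    proof (cases "D1 f x d = b")
      case True then show ?thesis by simp
    next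
      case False
      define \<gamma> where "\<gamma> = norm (D1 f x d - b)"
      have \<gamma>: "\<gamma> > 0" using False by (simp add: \<gamma>_def)
      have \<gamma>8: "\<gamma> / 8 > 0" using \<gamma> by simp
      have E2: "\<forall>\<^sub>F t in at_right 0. \<forall>\<tau>\<in>{0<..t}. dist ((g (x + \<tau> *\<^sub>R d) - g x) /\<^sub>R \<tau>) b < \<gamma> / 4"
        by (rule eventually_all_right) (rule tendstoD[OF FD[of d, folded b_def]], use \<gamma> in simp)
      have E3: "\<forall>\<^sub>F t in at_right 0. K * (t * norm (w t)) < \<gamma> / 4"
      proof -
        have "((\<lambda>t. K * (t * norm (w t))) \<longlongrightarrow> K * 0) (at_right 0)"
          by (intro tendsto_intros a_tendsto[OF w])
        then show ?thesis using \<gamma> by (intro order_tendstoD(2)) auto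
      qed
      have E4: "\<forall>\<^sub>F t in at_right 0. t * norm d < \<rho>"
      proof -
        have "((\<lambda>t. t * norm d) \<longlongrightarrow> 0 * norm d) (at_right 0)"
          by (intro tendsto_intros)
        then show ?thesis using \<rho> by (intro order_tendstoD(2)) auto
      qed
      show ?thesis using ET[OF w \<gamma>8, of d] E2 E3 E4
      proof eventually_elim
        case (elim t)
        then have t: "0 < t" "t < 1" and inb: "\<forall>\<tau>\<in>{0<..t}. pth x d (w t) \<tau> \<in> ball x \<rho>"
          and cb: "t * norm (D1 f x (w t) + D2 f x d d) \<le> \<gamma> / 8"
          and tay: "\<forall>\<tau>\<in>{0<..t}. norm (f (pth x d (w t) \<tau>) - g x - \<tau> *\<^sub>R D1 f x d
              - ((1/2) * \<tau>\<^sup>2) *\<^sub>R (D1 f x (w t) + D2 f x d d)) \<le> \<gamma> / 8 * \<tau>\<^sup>2"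
          and e2: "\<forall>\<tau>\<in>{0<..t}. dist ((g (x + \<tau> *\<^sub>R d) - g x) /\<^sub>R \<tau>) b < \<gamma> / 4"
          and e3: "K * (t * norm (w t)) < \<gamma> / 4" and e4: "t * norm d < \<rho>"
          using f by auto
        show ?case
        proof (intro ballI impI)
          fix \<tau> assume \<tau>: "\<tau> \<in> {0<..t}" and act: "g (pth x d (w t) \<tau>) = f (pth x d (w t) \<tau>)"
          define p where "p = pth x d (w t) \<tau>"
          define p0 where "p0 = x + \<tau> *\<^sub>R d"
          have \<tau>0: "0 < \<tau>" "\<tau> \<le> t" using \<tau> by auto
          have A: "dist ((f p - g x) /\<^sub>R \<tau>) (D1 f x d) \<le> 2 * (\<gamma> / 8)"
            by (rule q1_near[where t=t]) (use \<tau>0 t cb tay \<tau> in \<open>auto simp: p_def\<close>)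
          have p0b: "p0 \<in> ball x \<rho>"
          proof -
            have "norm (\<tau> *\<^sub>R d) \<le> t * norm d" using \<tau>0 by (simp add: mult_right_mono)
            then show ?thesis using e4 unfolding p0_def by (simp add: dist_norm)
          qed
          have pb: "p \<in> ball x \<rho>" using inb \<tau> unfolding p_def by blast
          have B: "norm ((g p - g x) /\<^sub>R \<tau> - (g p0 - g x) /\<^sub>R \<tau>) \<le> K * (t * norm (w t))"
          proof -
            have "(g p - g x) /\<^sub>R \<tau> - (g p0 - g x) /\<^sub>R \<tau> = inverse \<tau> *\<^sub>R (g p - g p0)"
              by (simp add: scaleR_diff_right)
            then have "norm ((g p - g x) /\<^sub>R \<tau> - (g p0 - g x) /\<^sub>R \<tau>) = inverse \<tau> * norm (g p - g p0)"
              using \<tau>0 by simp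
            also have "\<dots> \<le> inverse \<tau> * (K * norm (p - p0))"
              using g_lip[OF p0b pb] \<tau>0 by (intro mult_left_mono) auto
            also have "p - p0 = ((1/2) * \<tau>\<^sup>2) *\<^sub>R w t" unfolding p_def p0_def pth_def by simp
            also have "inverse \<tau> * (K * norm (((1/2) * \<tau>\<^sup>2) *\<^sub>R w t)) = K * ((1/2) * \<tau> * norm (w t))"
              using \<tau>0 by (simp add: power2_eq_square field_simps)
            also have "\<dots> \<le> K * (t * norm (w t))"
              using \<tau>0 K0 by (intro mult_left_mono mult_right_mono) auto
            finally show ?thesis .
          qed
          have C: "dist ((g p0 - g x) /\<^sub>R \<tau>) b < \<gamma> / 4" using e2 \<tau> unfolding p0_def by blast
          have "\<gamma> \<le> dist ((g p - g x) /\<^sub>R \<tau>) (D1 f x d) + dist ((g p - g x) /\<^sub>R \<tau>) b"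
            unfolding \<gamma>_def using dist_triangle3[of "D1 f x d" b "(g p - g x) /\<^sub>R \<tau>"] by (simp add: dist_norm)
          also have "dist ((g p - g x) /\<^sub>R \<tau>) b \<le> dist ((g p - g x) /\<^sub>R \<tau>) ((g p0 - g x) /\<^sub>R \<tau>) + dist ((g p0 - g x) /\<^sub>R \<tau>) b"
            by (rule dist_triangle)
          finally have "\<gamma> < \<gamma>"
            using A B C act e3 \<gamma> unfolding p_def[symmetric] by (simp add: dist_norm)
          then show "D1 f x d = b" by simp
        qed
      qed
    qed
  qed
  then have "\<forall>\<^sub>F t in at_right 0. \<forall>f\<in>F. \<forall>\<tau>\<in>{0<..t}. g (pth x d (w t) \<tau>) = f (pth x d (w t) \<tau>) \<longrightarrow> D1 f x d = b"
    by (rule eventually_ball_finite[OF finF])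
  then show ?thesis unfolding b_def
  proof (rule eventually_mono)
    fix t assume h: "\<forall>f\<in>F. \<forall>\<tau>\<in>{0<..t}. g (pth x d (w t) \<tau>) = f (pth x d (w t) \<tau>) \<longrightarrow> D1 f x d = dir_deriv g x d"
    show "\<forall>\<tau>\<in>{0<..t}. \<forall>f\<in>F. g (pth x d (w t) \<tau>) = f (pth x d (w t) \<tau>) \<longrightarrow> D1 f x d = dir_deriv g x d"
    proof (intro ballI impI)
      fix \<tau> f assume "\<tau> \<in> {0<..t}" "f \<in> F" "g (pth x d (w t) \<tau>) = f (pth x d (w t) \<tau>)"
      then show "D1 f x d = dir_deriv g x d" using h by blast
    qed
  qed
qed

end

context pc2_loc begin

lemma SO:
  assumes w: "((\<lambda>t. t *\<^sub>R w t) \<longlongrightarrow> 0) (at_right 0)" and e: "\<epsilon> > 0"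
  shows "\<forall>\<^sub>F t in at_right 0. \<forall>\<tau>\<in>{0<..t}.
     dist ((g (pth x d (w t) \<tau>) - g x - \<tau> *\<^sub>R dir_deriv g x d) /\<^sub>R ((1/2) * \<tau>\<^sup>2))
          ((g (pth x d (w t) t) - g x - t *\<^sub>R dir_deriv g x d) /\<^sub>R ((1/2) * t\<^sup>2)) \<le> \<epsilon>"
proof -
  define b where "b = dir_deriv g x d"
  define e' where "e' = \<epsilon> / (2 * 3 ^ card F)"
  have e': "e' > 0" unfolding e'_def using e by simp
  have eq: "3 ^ card F * (2 * e') = \<epsilon>" unfolding e'_def by simp
  show ?thesis using ET[OF w e', of d] BI[OF w, of d]
  proof eventually_elim
    case (elim t)
    then have t: "0 < t" "t < 1" and inb: "\<forall>\<tau>\<in>{0<..t}. pth x d (w t) \<tau> \<in> ball x \<rho>"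
      and tay: "\<forall>f\<in>F. \<forall>\<tau>\<in>{0<..t}. norm (f (pth x d (w t) \<tau>) - g x - \<tau> *\<^sub>R D1 f x d
          - ((1/2) * \<tau>\<^sup>2) *\<^sub>R (D1 f x (w t) + D2 f x d d)) \<le> e' * \<tau>\<^sup>2"
      and bi: "\<forall>\<tau>\<in>{0<..t}. \<forall>f\<in>F. g (pth x d (w t) \<tau>) = f (pth x d (w t) \<tau>) \<longrightarrow> D1 f x d = b"
      unfolding b_def by auto
    have "\<forall>\<tau>\<in>{0<..t}. dist ((g (pth x d (w t) \<tau>) - g x - \<tau> *\<^sub>R b) /\<^sub>R ((1/2) * \<tau>\<^sup>2))
          ((g (pth x d (w t) t) - g x - t *\<^sub>R b) /\<^sub>R ((1/2) * t\<^sup>2)) \<le> 3 ^ card F * (2 * e')"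
    proof (rule cluster_apply[where cf="\<lambda>f. D1 f x (w t) + D2 f x d d"
          and q="\<lambda>\<tau>. (g (pth x d (w t) \<tau>) - g x - \<tau> *\<^sub>R b) /\<^sub>R ((1/2) * \<tau>\<^sup>2)", OF t(1) _ finF])
      show "continuous_on {0<..t} (\<lambda>\<tau>. (g (pth x d (w t) \<tau>) - g x - \<tau> *\<^sub>R b) /\<^sub>R ((1/2) * \<tau>\<^sup>2))"
        using cont_G[OF inb] by (intro continuous_intros) auto
      show "0 \<le> 2 * e'" using e' by simp
      fix \<tau> assume \<tau>: "\<tau> \<in> {0<..t}"
      obtain f where f: "f \<in> F" "g (pth x d (w t) \<tau>) = f (pth x d (w t) \<tau>)" using sel inb \<tau> by blast
      have bf: "D1 f x d = b" using bi \<tau> f by blast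
      have "dist ((f (pth x d (w t) \<tau>) - g x - \<tau> *\<^sub>R b) /\<^sub>R ((1/2) * \<tau>\<^sup>2)) (D1 f x (w t) + D2 f x d d) \<le> 2 * e'"
        by (rule q2_near) (use \<tau> tay f bf in auto)
      then show "\<exists>f\<in>F. dist ((g (pth x d (w t) \<tau>) - g x - \<tau> *\<^sub>R b) /\<^sub>R ((1/2) * \<tau>\<^sup>2)) (D1 f x (w t) + D2 f x d d) \<le> 2 * e'"
        using f by auto
    qed
    then show ?case unfolding eq b_def .
  qed
qed

lemma dd_exists:
  "((\<lambda>t. (g (x + t *\<^sub>R d + ((1/2) * t\<^sup>2) *\<^sub>R W) - g x - t *\<^sub>R dir_deriv g x d) /\<^sub>R ((1/2) * t\<^sup>2))
      \<longlongrightarrow> dir_deriv2 g x d W) (at_right 0)"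
proof -
  have w: "((\<lambda>t::real. t *\<^sub>R W) \<longlongrightarrow> 0) (at_right 0)"
  proof -
    have "((\<lambda>t::real. t *\<^sub>R W) \<longlongrightarrow> 0 *\<^sub>R W) (at_right 0)" by (intro tendsto_intros)
    then show ?thesis by simp
  qed
  have "\<forall>\<epsilon>>0. \<forall>\<^sub>F t in at_right 0. \<forall>\<tau>\<in>{0<..t}.
     dist ((g (x + \<tau> *\<^sub>R d + ((1/2) * \<tau>\<^sup>2) *\<^sub>R W) - g x - \<tau> *\<^sub>R dir_deriv g x d) /\<^sub>R ((1/2) * \<tau>\<^sup>2))
          ((g (x + t *\<^sub>R d + ((1/2) * t\<^sup>2) *\<^sub>R W) - g x - t *\<^sub>R dir_deriv g x d) /\<^sub>R ((1/2) * t\<^sup>2)) \<le> \<epsilon>"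
  proof (intro allI impI)
    fix \<epsilon> :: real assume "\<epsilon> > 0"
    from SO[OF w this, where d=d]
    show "\<forall>\<^sub>F t in at_right 0. \<forall>\<tau>\<in>{0<..t}.
     dist ((g (x + \<tau> *\<^sub>R d + ((1/2) * \<tau>\<^sup>2) *\<^sub>R W) - g x - \<tau> *\<^sub>R dir_deriv g x d) /\<^sub>R ((1/2) * \<tau>\<^sup>2))
          ((g (x + t *\<^sub>R d + ((1/2) * t\<^sup>2) *\<^sub>R W) - g x - t *\<^sub>R dir_deriv g x d) /\<^sub>R ((1/2) * t\<^sup>2)) \<le> \<epsilon>"
      by (simp only: pth_def)
  qed
  from cauchy_right[OF this] obtain L where L:
    "((\<lambda>t. (g (x + t *\<^sub>R d + ((1/2) * t\<^sup>2) *\<^sub>R W) - g x - t *\<^sub>R dir_deriv g x d) /\<^sub>R ((1/2) * t\<^sup>2)) \<longlongrightarrow> L) (at_right 0)"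
    by blast
  then have "dir_deriv2 g x d W = L" unfolding dir_deriv2_def by (intro tendsto_Lim) auto
  then show ?thesis using L by simp
qed

lemma sodd: "so_dir_differentiable g x"
  unfolding so_dir_differentiable_def using FD dd_exists by blast

lemma result: "so_dir_differentiable g x \<and> so_gph_regular g x"
proof
  show "so_dir_differentiable g x" by (rule sodd)
  show "so_gph_regular g x"
    unfolding so_gph_regular_def
  proof (intro conjI allI impI)
    show "locally_lipschitz_at g x" by (rule lipschitz_at)
    show "so_dir_differentiable g x" by (rule sodd)
    fix d :: 'a and w :: "real \<Rightarrow> 'a"
    assume w: "((\<lambda>t. t *\<^sub>R w t) \<longlongrightarrow> 0) (at_right 0)"
    define b where "b = dir_deriv g x d"
    define Q where "Q W \<tau> = (g (x + \<tau> *\<^sub>R d + ((1/2) * \<tau>\<^sup>2) *\<^sub>R W) - g x - \<tau> *\<^sub>R b) /\<^sub>R ((1/2) * \<tau>\<^sup>2)" for W \<tau>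
    define r where "r t = g (x + t *\<^sub>R d + ((1/2) * t\<^sup>2) *\<^sub>R w t) - (g x + t *\<^sub>R b + ((1/2) * t\<^sup>2) *\<^sub>R dir_deriv2 g x d (w t))" for t
    show "\<exists>r. ((\<lambda>t. norm (r t) / t\<^sup>2) \<longlongrightarrow> 0) (at_right 0) \<and>
           (\<exists>\<delta>>0. \<forall>t. 0 \<le> t \<and> t < \<delta> \<longrightarrow>
              g (x + t *\<^sub>R d + ((1/2) * t\<^sup>2) *\<^sub>R w t) =
                g x + t *\<^sub>R dir_deriv g x d + ((1/2) * t\<^sup>2) *\<^sub>R dir_deriv2 g x d (w t) + r t)"
    proof (rule exI[of _ r], rule conjI[rotated])
      show "\<exists>\<delta>>0. \<forall>t. 0 \<le> t \<and> t < \<delta> \<longrightarrow>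
              g (x + t *\<^sub>R d + ((1/2) * t\<^sup>2) *\<^sub>R w t) =
                g x + t *\<^sub>R dir_deriv g x d + ((1/2) * t\<^sup>2) *\<^sub>R dir_deriv2 g x d (w t) + r t"
        by (rule exI[of _ 1]) (simp add: r_def b_def)
      show "((\<lambda>t. norm (r t) / t\<^sup>2) \<longlongrightarrow> 0) (at_right 0)"
      proof (rule tendstoI)
        fix \<epsilon> :: real assume e: "\<epsilon> > 0"
        have ev0: "\<forall>\<^sub>F t in at_right (0::real). 0 < t"
          unfolding eventually_at_right_field by (intro exI[of _ 1]) auto
        show "\<forall>\<^sub>F t in at_right 0. dist (norm (r t) / t\<^sup>2) 0 < \<epsilon>"
          using SO[OF w e, where d=d] ev0
        proof eventually_elim
          case (elim t)
          then have t: "0 < t" and so: "\<forall>\<tau>\<in>{0<..t}. dist (Q (w t) \<tau>) (Q (w t) t) \<le> \<epsilon>"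
            unfolding Q_def b_def pth_def by auto
          have lim: "(Q (w t) \<longlongrightarrow> dir_deriv2 g x d (w t)) (at_right 0)"
            using dd_exists[of d "w t"] unfolding Q_def b_def .
          have ev: "\<forall>\<^sub>F \<tau> in at_right 0. dist (Q (w t) t) (Q (w t) \<tau>) \<le> \<epsilon>"
            unfolding eventually_at_right_field using t so by (intro exI[of _ t]) (auto simp: dist_commute)
          have dle: "dist (Q (w t) t) (dir_deriv2 g x d (w t)) \<le> \<epsilon>"
            by (rule Lim_dist_ubound[OF _ lim ev]) simp
          have rq: "r t = ((1/2) * t\<^sup>2) *\<^sub>R (Q (w t) t - dir_deriv2 g x d (w t))"
            using t unfolding r_def Q_def by (simp add: scaleR_diff_right algebra_simps)
          have nr: "norm (r t) = ((1/2) * t\<^sup>2) * dist (Q (w t) t) (dir_deriv2 g x d (w t))"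
            unfolding rq norm_scaleR dist_norm by simp
          have "norm (r t) / t\<^sup>2 = (1/2) * dist (Q (w t) t) (dir_deriv2 g x d (w t))"
            using t unfolding nr by (simp add: field_simps)
          also have "\<dots> < \<epsilon>" using dle e by simp
          finally show ?case by simp
        qed
      qed
    qed
  qed
qed

end

theorem proposition2p2:
  fixes U :: "'a::euclidean_space set" and g :: "'a \<Rightarrow> 'b::euclidean_space"
  assumes "open U" and "PC2_on U g"
  shows "\<forall>x\<in>U. so_dir_differentiable g x \<and> so_gph_regular g x"
proof
  fix x assume xU: "x \<in> U"
  obtain V where V: "open V" "x \<in> V" "V \<subseteq> U" and cs: "cont_selection_C2 V g"
    using assms(2) xU unfolding PC2_on_def by blast
  obtain F where gcV: "continuous_on V g" and finF: "finite F" and C2: "\<And>f. f \<in> F \<Longrightarrow> C2_on V f"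
    and selV: "\<And>y. y \<in> V \<Longrightarrow> \<exists>f\<in>F. g y = f y"
    using cs unfolding cont_selection_C2_def by blast
  define P where "P f f' f'' \<longleftrightarrow> (\<forall>x\<in>V. (f has_derivative blinfun_apply (f' x)) (at x)) \<and>
        (\<forall>x\<in>V. (f' has_derivative blinfun_apply (f'' x)) (at x)) \<and> continuous_on V f''"
    for f :: "'a \<Rightarrow> 'b" and f' :: "'a \<Rightarrow> ('a \<Rightarrow>\<^sub>L 'b)" and f'' :: "'a \<Rightarrow> ('a \<Rightarrow>\<^sub>L ('a \<Rightarrow>\<^sub>L 'b))"
  define D1 where "D1 f = (SOME f'. \<exists>f''. P f f' f'')" for f
  define D2 where "D2 f = (SOME f''. P f (D1 f) f'')" for f
  have PD: "P f (D1 f) (D2 f)" if "f \<in> F" for f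
  proof -
    have "\<exists>f' f''. P f f' f''" using C2[OF that] unfolding C2_on_def P_def by blast
    then have "\<exists>f''. P f (D1 f) f''" unfolding D1_def by (rule someI_ex)
    then show ?thesis unfolding D2_def by (rule someI_ex)
  qed
  have d1V: "\<And>f y. f \<in> F \<Longrightarrow> y \<in> V \<Longrightarrow> (f has_derivative blinfun_apply (D1 f y)) (at y)"
    using PD unfolding P_def by blast
  have d2V: "\<And>f y. f \<in> F \<Longrightarrow> y \<in> V \<Longrightarrow> (D1 f has_derivative blinfun_apply (D2 f y)) (at y)"
    using PD unfolding P_def by blast
  have c2V: "\<And>f. f \<in> F \<Longrightarrow> continuous_on V (D2 f)"
    using PD unfolding P_def by blast
  define F0 where "F0 = {f \<in> F. f x = g x}"
  have ev: "\<forall>f\<in>F. \<forall>\<^sub>F y in at x. (f x \<noteq> g x \<longrightarrow> f y \<noteq> g y) \<and> dist (D1 f y) (D1 f x) < 1 \<and> dist (D2 f y) (D2 f x) < 1"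
  proof
    fix f assume f: "f \<in> F"
    have cf: "isCont f x" using d1V[OF f V(2)] by (rule has_derivative_continuous)
    have cg: "isCont g x" using gcV V continuous_on_eq_continuous_at by blast
    have c1: "isCont (D1 f) x" using d2V[OF f V(2)] by (rule has_derivative_continuous)
    have c2: "isCont (D2 f) x" using c2V[OF f] V continuous_on_eq_continuous_at by blast
    have e1: "\<forall>\<^sub>F y in at x. f x \<noteq> g x \<longrightarrow> f y \<noteq> g y"
    proof (cases "f x = g x")
      case True then show ?thesis by simp
    next
      case False
      have "((\<lambda>y. f y - g y) \<longlongrightarrow> f x - g x) (at x)"
        using cf cg unfolding isCont_def by (intro tendsto_intros)
      then have "\<forall>\<^sub>F y in at x. f y - g y \<noteq> 0"
        by (rule tendsto_imp_eventually_ne) (use False in simp)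
      then show ?thesis by (rule eventually_mono) simp
    qed
    have e2: "\<forall>\<^sub>F y in at x. dist (D1 f y) (D1 f x) < 1"
      using c1 unfolding isCont_def by (rule tendstoD) simp
    have e3: "\<forall>\<^sub>F y in at x. dist (D2 f y) (D2 f x) < 1"
      using c2 unfolding isCont_def by (rule tendstoD) simp
    show "\<forall>\<^sub>F y in at x. (f x \<noteq> g x \<longrightarrow> f y \<noteq> g y) \<and> dist (D1 f y) (D1 f x) < 1 \<and> dist (D2 f y) (D2 f x) < 1"
      using e1 e2 e3 by eventually_elim blast
  qed
  have "\<forall>\<^sub>F y in at x. \<forall>f\<in>F. (f x \<noteq> g x \<longrightarrow> f y \<noteq> g y) \<and> dist (D1 f y) (D1 f x) < 1 \<and> dist (D2 f y) (D2 f x) < 1"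
    by (rule eventually_ball_finite[OF finF ev])
  then obtain \<delta> where \<delta>: "\<delta> > 0" and \<delta>P: "\<And>y. y \<noteq> x \<Longrightarrow> dist y x < \<delta> \<Longrightarrow>
      \<forall>f\<in>F. (f x \<noteq> g x \<longrightarrow> f y \<noteq> g y) \<and> dist (D1 f y) (D1 f x) < 1 \<and> dist (D2 f y) (D2 f x) < 1"
    unfolding eventually_at by (auto simp del: ball_simps)
  obtain e where e: "e > 0" "ball x e \<subseteq> V" using V(1,2) open_contains_ball by blast
  define \<rho> where "\<rho> = min \<delta> e"
  have \<rho>: "\<rho> > 0" unfolding \<rho>_def using \<delta> e by simp
  have bV: "ball x \<rho> \<subseteq> V" using e unfolding \<rho>_def by auto
  have near: "\<And>f y. f \<in> F \<Longrightarrow> y \<in> ball x \<rho> \<Longrightarrow>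
      (f x \<noteq> g x \<longrightarrow> f y \<noteq> g y) \<and> dist (D1 f y) (D1 f x) < 1 \<and> dist (D2 f y) (D2 f x) < 1"
  proof -
    fix f y assume f: "f \<in> F" and y: "y \<in> ball x \<rho>"
    show "(f x \<noteq> g x \<longrightarrow> f y \<noteq> g y) \<and> dist (D1 f y) (D1 f x) < 1 \<and> dist (D2 f y) (D2 f x) < 1"
    proof (cases "y = x")
      case True then show ?thesis by simp
    next
      case False
      have "dist y x < \<delta>" using y unfolding \<rho>_def by (simp add: dist_commute)
      then show ?thesis using \<delta>P[OF False] f by blast
    qed
  qed
  define K where "K = (\<Sum>f\<in>F. norm (D1 f x)) + 1"
  define M where "M = (\<Sum>f\<in>F. norm (D2 f x)) + 1"
  have loc: "pc2_loc g x F0 D1 D2 \<rho> K M"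
  proof
    show "finite F0" unfolding F0_def using finF by simp
    show "\<rho> > 0" by (rule \<rho>)
    show "\<exists>f\<in>F0. g y = f y" if y: "y \<in> ball x \<rho>" for y
    proof -
      obtain f where f: "f \<in> F" "g y = f y" using selV bV y by blast
      have "f x = g x" using near[OF f(1) y] f(2) by auto
      then show ?thesis using f unfolding F0_def by auto
    qed
    show "f x = g x" if "f \<in> F0" for f using that unfolding F0_def by simp
    show "continuous_on (ball x \<rho>) g" using gcV bV by (rule continuous_on_subset)
    show "(f has_derivative blinfun_apply (D1 f y)) (at y)" if "f \<in> F0" "y \<in> ball x \<rho>" for f y
      using d1V that bV unfolding F0_def by blast
    show "(D1 f has_derivative blinfun_apply (D2 f y)) (at y)" if "f \<in> F0" "y \<in> ball x \<rho>" for f y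
      using d2V that bV unfolding F0_def by blast
    show "continuous_on (ball x \<rho>) (D2 f)" if "f \<in> F0" for f
      using c2V[of f] that bV unfolding F0_def by (blast intro: continuous_on_subset)
    show "norm (D1 f y) \<le> K" if f0: "f \<in> F0" and y: "y \<in> ball x \<rho>" for f y
    proof -
      have f: "f \<in> F" using f0 unfolding F0_def by simp
      have "norm (D1 f y) \<le> norm (D1 f x) + norm (D1 f y - D1 f x)" by (rule norm_triangle_sub)
      moreover have "norm (D1 f y - D1 f x) < 1" using near[OF f y] by (simp add: dist_norm)
      moreover have "norm (D1 f x) \<le> (\<Sum>f\<in>F. norm (D1 f x))"
        by (rule member_le_sum[OF f _ finF]) simp
      ultimately show ?thesis unfolding K_def by linarith
    qed
    show "norm (D2 f y) \<le> M" if f0: "f \<in> F0" and y: "y \<in> ball x \<rho>" for f y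
    proof -
      have f: "f \<in> F" using f0 unfolding F0_def by simp
      have "norm (D2 f y) \<le> norm (D2 f x) + norm (D2 f y - D2 f x)" by (rule norm_triangle_sub)
      moreover have "norm (D2 f y - D2 f x) < 1" using near[OF f y] by (simp add: dist_norm)
      moreover have "norm (D2 f x) \<le> (\<Sum>f\<in>F. norm (D2 f x))"
        by (rule member_le_sum[OF f _ finF]) simp
      ultimately show ?thesis unfolding M_def by linarith
    qed
  qed
  show "so_dir_differentiable g x \<and> so_gph_regular g x"
    by (rule pc2_loc.result[OF loc])
qed

end
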